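(* Let $h$ be a complex-valued $\mathcal P\times\mathcal B(\mathbb R^d)$-measurable function on $\mathcal O_\tau\times\mathbb R^d$ such that $\int_0^\tau\|h(t,\cdot)\|^2_{L_2(\mathbb R^d)}dt<\infty$ almost surely. Then for every $\varphi\in\mathcal F^{-1}\mathcal D(\mathbb R^d)$ and every $T\in(0,\infty)$, $\int_0^T1_{\mathcal O_\tau}(t)\sum_{k=1}^\infty|\langle h(t,\cdot)\eta_k,\varphi\rangle|^2dt<\infty$ almost surely; consequently the stochastic integral $\int_0^t1_{\mathcal O_\tau}(s)\langle h(s,\cdot)\eta_k,\varphi\rangle dB^k_s$ is well-defined.
   Context: $(\Omega,\mathscr F,P)$ is a complete probability space with a filtration $(\mathscr F_t)_{t\ge0}$ of sub-$\sigma$-fields each containing all $P$-null sets; $\mathcal P$ is the predictable $\sigma$-algebra on $\Omega\times[0,\infty)$; $B^1_t,B^2_t,\dots$ are independent one-dimensional Wiener processes relative to $(\mathscr F_t)$; repeated $k$ is summed over $\mathbb N$. $\tau$ is a finite stopping time and $\mathcal O_\tau=\{(\omega,t):0<t\le\tau(\omega)\}$. $\{\eta_k\}_{k\in\mathbb N}$ is an orthonormal basis of $L_2(\mathbb R^d)$ with every $\eta_k\in\mathcal S(\mathbb R^d)$. $\mathcal F[f](\xi)=(2\pi)^{-d/2}\int e^{-i\xi\cdot x}f(x)dx$ (extended to $L_2$ by Plancherel), $\mathcal F^{-1}\mathcal D(\mathbb R^d):=\{\varphi\in\mathcal S(\mathbb R^d):\mathcal F[\varphi]\in C_c^\infty(\mathbb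 R^d)\}$, and for $\varphi\in\mathcal F^{-1}\mathcal D$, $\langle h(t,\cdot)\eta_k,\varphi\rangle:=\int_{\mathbb R^d}\mathcal F[h(t,\cdot)\eta_k](\xi)\overline{\mathcal F[\varphi](\xi)}d\xi$. *)

theory Defs
  imports "HOL-Analysis.Analysis" "HOL-Probability.Probability"
begin

fun dderivs :: "'a::euclidean_space list \<Rightarrow> ('a \<Rightarrow> 'b::real_normed_vector) \<Rightarrow> 'a \<Rightarrow> 'b" where
  "dderivs [] f = f"
| "dderivs (v # vs) f = (\<lambda>x. frechet_derivative (dderivs vs f) (at x) v)"

definition smooth_fun :: "('a::euclidean_space \<Rightarrow> 'b::real_normed_vector) \<Rightarrow> bool" where
  "smooth_fun f \<longleftrightarrow> (\<forall>vs. set vs \<subseteq> Basis \<longrightarrow> (\<forall>x. dderivs vs f differentiable at x))"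

definition schwartz :: "('a::euclidean_space \<Rightarrow> complex) \<Rightarrow> bool" where
  "schwartz f \<longleftrightarrow> smooth_fun f \<and>
     (\<forall>vs k. set vs \<subseteq> Basis \<longrightarrow>
        (\<exists>C. \<forall>x. (1 + norm x) ^ k * norm (dderivs vs f x) \<le> C))"

definition fourier :: "('a::euclidean_space \<Rightarrow> complex) \<Rightarrow> 'a \<Rightarrow> complex" where
  "fourier f \<xi> = complex_of_real ((2 * pi) powr (- real DIM('a) / 2)) *
      (\<integral>x. exp (- \<i> * complex_of_real (\<xi> \<bullet> x)) * f x \<partial>lborel)"

definition inv_fourier_D :: "('a::euclidean_space \<Rightarrow> complex) set" where
  "inv_fourier_D = {\<phi>. schwartz \<phi> \<and> smooth_fun (fourier \<phi>)
                        \<and> compact (closure {\<xi>. fourier \<phi> \<xi> \<noteq> 0})}"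

definition fpair :: "('a::euclidean_space \<Rightarrow> complex) \<Rightarrow> ('a \<Rightarrow> complex) \<Rightarrow> complex" where
  "fpair g \<phi> = (\<integral>\<xi>. fourier g \<xi> * cnj (fourier \<phi> \<xi>) \<partial>lborel)"

definition L2 :: "('a::euclidean_space \<Rightarrow> complex) set" where
  "L2 = {f. f \<in> borel_measurable lborel \<and> integrable lborel (\<lambda>x. (cmod (f x))\<^sup>2)}"

definition L2_inner :: "('a::euclidean_space \<Rightarrow> complex) \<Rightarrow> ('a \<Rightarrow> complex) \<Rightarrow> complex" where
  "L2_inner f g = (\<integral>x. f x * cnj (g x) \<partial>lborel)"

definition L2_onb :: "(nat \<Rightarrow> 'a::euclidean_space \<Rightarrow> complex) \<Rightarrow> bool" where
  "L2_onb e \<longleftrightarrow> (\<forall>k. e k \<in> L2) \<and>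
     (\<forall>j k. L2_inner (e j) (e k) = (if j = k then 1 else 0)) \<and>
     (\<forall>f \<in> L2. (\<forall>k. L2_inner f (e k) = 0) \<longrightarrow> (AE x in lborel. f x = 0))"

definition predictable :: "'w measure \<Rightarrow> (real \<Rightarrow> 'w measure) \<Rightarrow> ('w \<times> real) measure" where
  "predictable M F = sigma (space M \<times> {0..})
     ({A \<times> {0} | A. A \<in> sets (F 0)} \<union>
      {A \<times> {s<..t} | A s t. 0 \<le> s \<and> s < t \<and> A \<in> sets (F s)})"

definition usual_filtration :: "'w measure \<Rightarrow> (real \<Rightarrow> 'w measure) \<Rightarrow> bool" where
  "usual_filtration M F \<longleftrightarrow> filtration (space M) F \<and>
     (\<forall>t. sets (F t) \<subseteq> sets M) \<and> (\<forall>t\<ge>0. null_sets M \<subseteq> sets (F t))"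

definition stoch_interval :: "('w \<Rightarrow> real) \<Rightarrow> ('w \<times> real) set" where
  "stoch_interval \<tau> = {(\<omega>, t). 0 < t \<and> t \<le> \<tau> \<omega>}"

end

theory Submission
  imports Defs
begin


lemma nn_integral_cmult_le:
  fixes c :: ennreal
  assumes "0 < c" "c < top"
  shows "(\<integral>\<^sup>+x. c * f x \<partial>M) \<le> c * integral\<^sup>N M f"
proof -
  have "integral\<^sup>S M g \<le> c * integral\<^sup>N M f" if g: "simple_function M g" "g \<le> (\<lambda>x. c * f x)" for g
  proof -
    let ?g = "\<lambda>x. inverse c * g x"
    have s: "simple_function M ?g" using simple_function_compose1[OF g(1), of "\<lambda>y. inverse c * y"] by simp
    have ic: "inverse c * c = 1" using assms
      using ennreal_divide_self[of c] by (simp add: divide_ennreal_def mult.commute)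
    have "?g x \<le> f x" for x
    proof -
      have "?g x \<le> inverse c * (c * f x)" using g(2) by (auto simp: le_fun_def intro: mult_left_mono)
      also have "\<dots> = f x" by (simp add: mult.assoc[symmetric] ic)
      finally show ?thesis .
    qed
    hence le: "integral\<^sup>S M ?g \<le> integral\<^sup>N M f"
      unfolding nn_integral_def using s by (intro SUP_upper) (auto simp: le_fun_def)
    have eq: "g = (\<lambda>x. c * ?g x)" by (simp add: mult.assoc[symmetric] mult.commute[of c] ic)
    have "integral\<^sup>S M g = c * integral\<^sup>S M ?g"
      by (subst eq) (simp add: s)
    also have "\<dots> \<le> c * integral\<^sup>N M f" using le by (intro mult_left_mono) auto
    finally show ?thesis .
  qed
  then show ?thesis unfolding nn_integral_def[of _ "\<lambda>x. c * f x"] by (intro SUP_least) auto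
qed

lemma borel_measurable_cnj'[measurable (raw)]:
  "f \<in> borel_measurable M \<Longrightarrow> (\<lambda>x. cnj (f x)) \<in> borel_measurable M"
proof -
  assume f: "f \<in> borel_measurable M"
  have "cnj \<in> borel_measurable borel"
    by (rule borel_measurable_continuous_onI) (intro continuous_intros)
  from measurable_compose[OF f this] show ?thesis by (simp add: o_def)
qed

lemma L2_int:
  assumes "f \<in> L2" "g \<in> L2"
  shows "integrable lborel (\<lambda>x. f x * cnj (g x))"
proof (rule Bochner_Integration.integrable_bound)
  show "integrable lborel (\<lambda>x. (cmod (f x))\<^sup>2 + (cmod (g x))\<^sup>2)" using assms by (auto simp: L2_def)
  have [measurable]: "f \<in> borel_measurable lborel" "g \<in> borel_measurable lborel" using assms by (auto simp: L2_def)
  show "(\<lambda>x. f x * cnj (g x)) \<in> borel_measurable lborel" by measurable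
  show "AE x in lborel. norm (f x * cnj (g x)) \<le> norm ((cmod (f x))\<^sup>2 + (cmod (g x))\<^sup>2)"
  proof (intro AE_I2)
    fix x
    have "2 * (cmod (f x) * cmod (g x)) \<le> (cmod (f x))\<^sup>2 + (cmod (g x))\<^sup>2"
      using sum_squares_bound[of "cmod (f x)" "cmod (g x)"] by (simp add: power2_eq_square)
    moreover have "0 \<le> cmod (f x) * cmod (g x)" by simp
    ultimately have "cmod (f x) * cmod (g x) \<le> (cmod (f x))\<^sup>2 + (cmod (g x))\<^sup>2" by linarith
    then show "norm (f x * cnj (g x)) \<le> norm ((cmod (f x))\<^sup>2 + (cmod (g x))\<^sup>2)"
      by (simp add: norm_mult)
  qed
qed

lemma L2_diff: "f \<in> L2 \<Longrightarrow> g \<in> L2 \<Longrightarrow> (\<lambda>x. f x - g x) \<in> L2"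
proof -
  assume a: "f \<in> L2" "g \<in> L2"
  show ?thesis unfolding L2_def
  proof (safe)
    show "(\<lambda>x. f x - g x) \<in> borel_measurable lborel" using a by (auto simp: L2_def)
    show "integrable lborel (\<lambda>x. (cmod (f x - g x))\<^sup>2)"
    proof (rule Bochner_Integration.integrable_bound)
      show "integrable lborel (\<lambda>x. 2 * (cmod (f x))\<^sup>2 + 2 * (cmod (g x))\<^sup>2)" using a by (auto simp: L2_def)
      show "(\<lambda>x. (cmod (f x - g x))\<^sup>2) \<in> borel_measurable lborel" using a by (auto simp: L2_def)
      show "AE x in lborel. norm ((cmod (f x - g x))\<^sup>2) \<le> norm (2 * (cmod (f x))\<^sup>2 + 2 * (cmod (g x))\<^sup>2)"
      proof (intro AE_I2)
        fix x
        have "cmod (f x - g x) \<le> cmod (f x) + cmod (g x)" by (rule norm_triangle_ineq4)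
        hence "(cmod (f x - g x))\<^sup>2 \<le> (cmod (f x) + cmod (g x))\<^sup>2" by (intro power_mono) auto
        also have "\<dots> \<le> 2 * (cmod (f x))\<^sup>2 + 2 * (cmod (g x))\<^sup>2"
          using sum_squares_bound[of "cmod (f x)" "cmod (g x)"] by (simp add: power2_eq_square algebra_simps)
        finally show "norm ((cmod (f x - g x))\<^sup>2) \<le> norm (2 * (cmod (f x))\<^sup>2 + 2 * (cmod (g x))\<^sup>2)" by simp
      qed
    qed
  qed
qed

lemma L2_scale: "f \<in> L2 \<Longrightarrow> (\<lambda>x. c * f x) \<in> L2"
  by (auto simp: L2_def norm_mult power_mult_distrib)

lemma L2_cnj: "f \<in> L2 \<Longrightarrow> (\<lambda>x. cnj (f x)) \<in> L2"
  by (auto simp: L2_def)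

lemma L2_zero: "(\<lambda>x. 0) \<in> L2"
  by (auto simp: L2_def)

lemma L2_add: "f \<in> L2 \<Longrightarrow> g \<in> L2 \<Longrightarrow> (\<lambda>x. f x + g x) \<in> L2"
  using L2_diff[of f "\<lambda>x. (-1) * g x"] L2_scale[of g "-1"] by simp

lemma L2_sum: "finite A \<Longrightarrow> (\<And>k. e k \<in> L2) \<Longrightarrow> (\<lambda>x. \<Sum>k\<in>A. a k * e k x) \<in> L2"
proof (induction A rule: finite_induct)
  case empty then show ?case by (simp add: L2_zero)
next
  case (insert k F)
  have "(\<lambda>x. a k * e k x + (\<Sum>k\<in>F. a k * e k x)) \<in> L2"
    using insert by (intro L2_add L2_scale) auto
  then show ?case using insert by simp
qed

lemma ip_diff_left: "f \<in> L2 \<Longrightarrow> g \<in> L2 \<Longrightarrow> h \<in> L2 \<Longrightarrow>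
   L2_inner (\<lambda>x. f x - g x) h = L2_inner f h - L2_inner g h"
  unfolding L2_inner_def by (simp add: left_diff_distrib L2_int)

lemma ip_diff_right: "f \<in> L2 \<Longrightarrow> g \<in> L2 \<Longrightarrow> h \<in> L2 \<Longrightarrow>
   L2_inner h (\<lambda>x. f x - g x) = L2_inner h f - L2_inner h g"
  unfolding L2_inner_def by (simp add: right_diff_distrib L2_int)

lemma ip_sum_left: "(\<And>k. e k \<in> L2) \<Longrightarrow> g \<in> L2 \<Longrightarrow>
   L2_inner (\<lambda>x. \<Sum>k\<in>A. a k * e k x) g = (\<Sum>k\<in>A. a k * L2_inner (e k) g)"
  unfolding L2_inner_def
  by (simp add: sum_distrib_right mult.assoc integral_sum L2_int)

lemma ip_sum_right: "(\<And>k. e k \<in> L2) \<Longrightarrow> g \<in> L2 \<Longrightarrow>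
   L2_inner g (\<lambda>x. \<Sum>k\<in>A. a k * e k x) = (\<Sum>k\<in>A. cnj (a k) * L2_inner g (e k))"
proof -
  assume e: "\<And>k. e k \<in> L2" and g: "g \<in> L2"
  have "(\<lambda>x. g x * cnj (\<Sum>k\<in>A. a k * e k x)) = (\<lambda>x. \<Sum>k\<in>A. cnj (a k) * (g x * cnj (e k x)))"
    by (auto simp: sum_distrib_left algebra_simps)
  then show ?thesis unfolding L2_inner_def
    using L2_int[OF g e] by (simp add: integral_sum)
qed

lemma ip_self: "L2_inner f f = complex_of_real (\<integral>x. (cmod (f x))\<^sup>2 \<partial>lborel)"
  unfolding L2_inner_def by (simp only: complex_norm_square[symmetric] integral_complex_of_real)

lemma ip_swap: "L2_inner g f = cnj (L2_inner f g)"
  unfolding L2_inner_def by (simp add: Bochner_Integration.integral_cnj[symmetric] mult.commute)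

lemma bessel_finite:
  fixes e :: "nat \<Rightarrow> 'a::euclidean_space \<Rightarrow> complex"
  assumes H: "H \<in> L2" and e: "\<And>k. e k \<in> L2"
    and orth: "\<And>j k. L2_inner (e j) (e k) = (if j = k then 1 else 0)"
  shows "(\<Sum>k<n. (cmod (L2_inner H (e k)))\<^sup>2) \<le> (\<integral>x. (cmod (H x))\<^sup>2 \<partial>lborel)"
proof -
  define c where "c k = L2_inner H (e k)" for k
  define S where "S x = (\<Sum>k<n. c k * e k x)" for x
  define \<Sigma> where "\<Sigma> = (\<Sum>k<n. (cmod (c k))\<^sup>2)"
  have S: "S \<in> L2" unfolding S_def by (rule L2_sum) (auto simp: e)
  have sq: "c k * cnj (c k) = complex_of_real ((cmod (c k))\<^sup>2)" for k
    by (simp only: complex_norm_square)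
  have HS: "L2_inner H S = of_real \<Sigma>"
    unfolding S_def \<Sigma>_def using e H
    by (subst ip_sum_right) (auto simp: c_def[symmetric] mult.commute[of "cnj _"] sq)
  have SH: "L2_inner S H = of_real \<Sigma>"
    using HS by (subst ip_swap) simp
  have SS: "L2_inner S S = of_real \<Sigma>"
  proof -
    have "L2_inner S S = (\<Sum>j<n. c j * L2_inner (e j) S)"
      unfolding S_def[abs_def] using e S unfolding S_def[abs_def] by (subst ip_sum_left) auto
    also have "\<dots> = (\<Sum>j<n. c j * (\<Sum>k<n. cnj (c k) * L2_inner (e j) (e k)))"
      unfolding S_def[abs_def] using e by (simp add: ip_sum_right)
    also have "\<dots> = (\<Sum>j<n. c j * cnj (c j))"
      by (simp add: orth if_distrib cong: if_cong)
    also have "\<dots> = of_real \<Sigma>" by (simp add: sq \<Sigma>_def)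
    finally show ?thesis .
  qed
  have D: "(\<lambda>x. H x - S x) \<in> L2" using H S by (rule L2_diff)
  have "L2_inner (\<lambda>x. H x - S x) (\<lambda>x. H x - S x)
      = L2_inner H H - L2_inner H S - (L2_inner S H - L2_inner S S)"
    using H S D by (simp add: ip_diff_left ip_diff_right)
  also have "\<dots> = of_real ((\<integral>x. (cmod (H x))\<^sup>2 \<partial>lborel) - \<Sigma>)"
    by (simp only: HS SH SS ip_self[of H]) simp
  finally have "of_real ((\<integral>x. (cmod (H x))\<^sup>2 \<partial>lborel) - \<Sigma>)
     = complex_of_real (\<integral>x. (cmod (H x - S x))\<^sup>2 \<partial>lborel)" by (simp add: ip_self)
  hence "(\<integral>x. (cmod (H x))\<^sup>2 \<partial>lborel) - \<Sigma> = (\<integral>x. (cmod (H x - S x))\<^sup>2 \<partial>lborel)"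
    using of_real_eq_iff by blast
  moreover have "0 \<le> (\<integral>x. (cmod (H x - S x))\<^sup>2 \<partial>lborel)" by simp
  ultimately have "\<Sigma> \<le> (\<integral>x. (cmod (H x))\<^sup>2 \<partial>lborel)" by linarith
  then show ?thesis by (simp add: \<Sigma>_def c_def)
qed



lemma fpair_repr:
  fixes \<phi> :: "'a::euclidean_space \<Rightarrow> complex"
  assumes \<phi>: "\<phi> \<in> inv_fourier_D"
  obtains \<Psi> B where "\<Psi> \<in> borel_measurable lborel" "\<And>x. cmod (\<Psi> x) \<le> B"
    "\<And>g. integrable lborel g \<Longrightarrow> fpair g \<phi> = (\<integral>x. g x * \<Psi> x \<partial>lborel)"
proof -
  let ?F = "fourier \<phi>"
  define K where "K = closure {\<xi>. ?F \<xi> \<noteq> 0}"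
  have K: "compact K" using \<phi> by (simp add: inv_fourier_D_def K_def)
  have "smooth_fun ?F" using \<phi> by (simp add: inv_fourier_D_def)
  then have "set ([]::'a list) \<subseteq> Basis \<longrightarrow> (\<forall>x. dderivs ([]::'a list) ?F differentiable at x)"
    unfolding smooth_fun_def by (rule spec)
  then have "\<forall>x. dderivs ([]::'a list) ?F differentiable at x" by simp
  hence cont: "continuous_on UNIV ?F"
    by (simp add: differentiable_imp_continuous_within continuous_at_imp_continuous_on)
  have Fm[measurable]: "?F \<in> borel_measurable borel"
    using cont by (rule borel_measurable_continuous_onI)
  have "integrable lborel (\<lambda>x. indicator K x *\<^sub>R ?F x)"
    using K cont by (intro borel_integrable_compact) (auto intro: continuous_on_subset)
  moreover have "(\<lambda>x. indicator K x *\<^sub>R ?F x) = ?F"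
  proof
    fix x show "indicator K x *\<^sub>R ?F x = ?F x"
      using closure_subset[of "{\<xi>. ?F \<xi> \<noteq> 0}"] by (auto simp: indicator_def K_def)
  qed
  ultimately have Fi: "integrable lborel ?F" by simp
  define c where "c = complex_of_real ((2 * pi) powr (- real DIM('a) / 2))"
  define E where "E \<xi> x = exp (- \<i> * complex_of_real (\<xi> \<bullet> x))" for \<xi> x :: 'a
  have nE: "cmod (E \<xi> x) = 1" for \<xi> x by (simp add: E_def)
  have Em[measurable]: "(\<lambda>p. E (fst p) (snd p)) \<in> borel_measurable (lborel \<Otimes>\<^sub>M lborel)"
    unfolding E_def by measurable
  define \<Psi> where "\<Psi> x = (\<integral>\<xi>. c * E \<xi> x * cnj (?F \<xi>) \<partial>lborel)" for x
  have "(\<lambda>(x, \<xi>). c * E \<xi> x * cnj (?F \<xi>)) \<in> borel_measurable (lborel \<Otimes>\<^sub>M lborel)"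
  proof -
    have "(\<lambda>p. E (snd p) (fst p)) \<in> borel_measurable (lborel \<Otimes>\<^sub>M lborel)"
      unfolding E_def by measurable
    then show ?thesis by (simp add: case_prod_beta) measurable
  qed
  hence \<Psi>m: "\<Psi> \<in> borel_measurable lborel"
    unfolding \<Psi>_def[abs_def] by (rule lborel.borel_measurable_lebesgue_integral[of "\<lambda>x \<xi>. c * E \<xi> x * cnj (?F \<xi>)", simplified])
  define B where "B = cmod c * (\<integral>\<xi>. cmod (?F \<xi>) \<partial>lborel)"
  have \<Psi>b: "cmod (\<Psi> x) \<le> B" for x
  proof -
    have "cmod (\<Psi> x) \<le> (\<integral>\<xi>. cmod (c * E \<xi> x * cnj (?F \<xi>)) \<partial>lborel)"
      unfolding \<Psi>_def by (rule integral_norm_bound)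
    also have "\<dots> = B" by (simp add: B_def norm_mult nE)
    finally show ?thesis .
  qed
  have rep: "fpair g \<phi> = (\<integral>x. g x * \<Psi> x \<partial>lborel)" if g: "integrable lborel g" for g
  proof -
    have gm[measurable]: "g \<in> borel_measurable lborel" using g by (rule borel_measurable_integrable)
    define f where "f \<xi> x = c * E \<xi> x * g x * cnj (?F \<xi>)" for \<xi> x
    have fm: "case_prod f \<in> borel_measurable (lborel \<Otimes>\<^sub>M lborel)"
      unfolding f_def using Em by (simp add: case_prod_beta) measurable
    have intx: "integrable lborel (\<lambda>x. f \<xi> x)" for \<xi>
    proof -
      have "integrable lborel (\<lambda>x. E \<xi> x * g x)"
      proof (rule Bochner_Integration.integrable_bound[OF integrable_norm[OF g]])
        have "(\<lambda>x. E (fst (\<xi>, x)) (snd (\<xi>, x))) \<in> borel_measurable lborel"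
          using Em by measurable
        then show "(\<lambda>x. E \<xi> x * g x) \<in> borel_measurable lborel" by simp
        show "AE x in lborel. norm (E \<xi> x * g x) \<le> norm (norm (g x))"
          by (simp add: norm_mult nE)
      qed
      then have "integrable lborel (\<lambda>x. (c * cnj (?F \<xi>)) * (E \<xi> x * g x))" by (rule integrable_mult_right)
      then show ?thesis unfolding f_def by (simp add: ac_simps)
    qed
    have "integrable (lborel \<Otimes>\<^sub>M lborel) (case_prod f)"
    proof (rule lborel_pair.Fubini_integrable[OF fm])
      have "(\<lambda>\<xi>. \<integral>x. norm (case_prod f (\<xi>, x)) \<partial>lborel)
          = (\<lambda>\<xi>. (cmod c * (\<integral>x. cmod (g x) \<partial>lborel)) * cmod (?F \<xi>))"
        by (simp add: f_def norm_mult nE ac_simps)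
      moreover have "integrable lborel (\<lambda>\<xi>. (cmod c * (\<integral>x. cmod (g x) \<partial>lborel)) * cmod (?F \<xi>))"
        using Fi by (intro integrable_mult_right integrable_norm)
      ultimately show "integrable lborel (\<lambda>\<xi>. \<integral>x. norm (case_prod f (\<xi>, x)) \<partial>lborel)" by simp
      show "AE \<xi> in lborel. integrable lborel (\<lambda>x. case_prod f (\<xi>, x))" using intx by simp
    qed
    from lborel_pair.Fubini_integral[OF this]
    have fub: "(\<integral>x. (\<integral>\<xi>. f \<xi> x \<partial>lborel) \<partial>lborel) = (\<integral>\<xi>. (\<integral>x. f \<xi> x \<partial>lborel) \<partial>lborel)" .
    have fg: "fourier g \<xi> = c * (\<integral>x. E \<xi> x * g x \<partial>lborel)" for \<xi>
      unfolding fourier_def c_def E_def by simp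
    have inner: "fourier g \<xi> * cnj (?F \<xi>) = (\<integral>x. f \<xi> x \<partial>lborel)" for \<xi>
    proof -
      have "(\<integral>x. f \<xi> x \<partial>lborel) = (\<integral>x. (c * cnj (?F \<xi>)) * (E \<xi> x * g x) \<partial>lborel)"
        unfolding f_def by (rule Bochner_Integration.integral_cong) (simp_all add: ac_simps)
      also have "\<dots> = (c * cnj (?F \<xi>)) * (\<integral>x. E \<xi> x * g x \<partial>lborel)"
        by (rule integral_mult_right_zero)
      finally show ?thesis by (simp add: fg ac_simps)
    qed
    have outer: "(\<integral>\<xi>. f \<xi> x \<partial>lborel) = g x * \<Psi> x" for x
    proof -
      have "(\<integral>\<xi>. f \<xi> x \<partial>lborel) = (\<integral>\<xi>. g x * (c * E \<xi> x * cnj (?F \<xi>)) \<partial>lborel)"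
        unfolding f_def by (rule Bochner_Integration.integral_cong) (simp_all add: ac_simps)
      also have "\<dots> = g x * \<Psi> x"
        unfolding \<Psi>_def by (rule integral_mult_right_zero)
      finally show ?thesis .
    qed
    have "fpair g \<phi> = (\<integral>\<xi>. (\<integral>x. f \<xi> x \<partial>lborel) \<partial>lborel)"
      unfolding fpair_def by (simp add: inner)
    also have "\<dots> = (\<integral>x. (\<integral>\<xi>. f \<xi> x \<partial>lborel) \<partial>lborel)" using fub by simp
    also have "\<dots> = (\<integral>x. g x * \<Psi> x \<partial>lborel)"
      by (simp add: outer)
    finally show ?thesis .
  qed
  show ?thesis using that \<Psi>m \<Psi>b rep by blast
qed



lemma pointwise_bound:
  fixes \<eta> :: "nat \<Rightarrow> 'a::euclidean_space \<Rightarrow> complex" and u :: "'a \<Rightarrow> complex"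
  assumes onb: "L2_onb \<eta>" and um: "u \<in> borel_measurable lborel"
    and \<Psi>m: "\<Psi> \<in> borel_measurable lborel" and \<Psi>b: "\<And>x. cmod (\<Psi> x) \<le> B"
    and rep: "\<And>g. integrable lborel g \<Longrightarrow> fpair g \<phi> = (\<integral>x. g x * \<Psi> x \<partial>lborel)"
  shows "(\<Sum>k. ennreal ((cmod (fpair (\<lambda>x. u x * \<eta> k x) \<phi>))\<^sup>2))
     \<le> ennreal (B\<^sup>2 + 1) * (\<integral>\<^sup>+x. ennreal ((cmod (u x))\<^sup>2) \<partial>lborel)"
proof (cases "(\<integral>\<^sup>+x. ennreal ((cmod (u x))\<^sup>2) \<partial>lborel) = \<infinity>")
  case True
  have "ennreal (B\<^sup>2 + 1) \<noteq> 0" by (simp add: add_pos_nonneg)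
  then have "ennreal (B\<^sup>2 + 1) * (\<integral>\<^sup>+x. ennreal ((cmod (u x))\<^sup>2) \<partial>lborel) = top"
    unfolding True infinity_ennreal_def by (rule ennreal_top_mult_left)
  then show ?thesis by simp
next
  case False
  have [measurable]: "u \<in> borel_measurable lborel" "\<Psi> \<in> borel_measurable lborel" using um \<Psi>m by auto
  have B0: "0 \<le> B" using \<Psi>b[of 0] norm_ge_zero[of "\<Psi> 0"] by linarith
  have ui: "integrable lborel (\<lambda>x. (cmod (u x))\<^sup>2)"
    by (rule integrableI_nonneg) (use False in \<open>auto simp: top.not_eq_extremum\<close>)
  have uL2: "u \<in> L2" using ui by (simp add: L2_def)
  define H where "H x = u x * \<Psi> x" for x
  have Hi: "integrable lborel (\<lambda>x. (cmod (H x))\<^sup>2)"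
  proof (rule Bochner_Integration.integrable_bound)
    show "integrable lborel (\<lambda>x. B\<^sup>2 * (cmod (u x))\<^sup>2)" using ui by simp
    show "(\<lambda>x. (cmod (H x))\<^sup>2) \<in> borel_measurable lborel" unfolding H_def by measurable
    show "AE x in lborel. norm ((cmod (H x))\<^sup>2) \<le> norm (B\<^sup>2 * (cmod (u x))\<^sup>2)"
    proof (intro AE_I2)
      fix x
      have "(cmod (\<Psi> x))\<^sup>2 \<le> B\<^sup>2" using \<Psi>b[of x] by (intro power_mono) auto
      hence "(cmod (\<Psi> x))\<^sup>2 * (cmod (u x))\<^sup>2 \<le> B\<^sup>2 * (cmod (u x))\<^sup>2" by (intro mult_right_mono) auto
      then show "norm ((cmod (H x))\<^sup>2) \<le> norm (B\<^sup>2 * (cmod (u x))\<^sup>2)"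
        by (simp add: H_def norm_mult power_mult_distrib mult.commute)
    qed
  qed
  have HL2: "H \<in> L2" using Hi unfolding L2_def H_def by simp
  have HB: "(\<integral>x. (cmod (H x))\<^sup>2 \<partial>lborel) \<le> B\<^sup>2 * (\<integral>x. (cmod (u x))\<^sup>2 \<partial>lborel)"
  proof -
    have "(\<integral>x. (cmod (H x))\<^sup>2 \<partial>lborel) \<le> (\<integral>x. B\<^sup>2 * (cmod (u x))\<^sup>2 \<partial>lborel)"
    proof (rule integral_mono[OF Hi])
      show "integrable lborel (\<lambda>x. B\<^sup>2 * (cmod (u x))\<^sup>2)" using ui by simp
      fix x
      have "(cmod (\<Psi> x))\<^sup>2 \<le> B\<^sup>2" using \<Psi>b[of x] by (intro power_mono) auto
      hence "(cmod (\<Psi> x))\<^sup>2 * (cmod (u x))\<^sup>2 \<le> B\<^sup>2 * (cmod (u x))\<^sup>2" by (intro mult_right_mono) auto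
      then show "(cmod (H x))\<^sup>2 \<le> B\<^sup>2 * (cmod (u x))\<^sup>2"
        by (simp add: H_def norm_mult power_mult_distrib mult.commute)
    qed
    then show ?thesis by simp
  qed
  define e where "e k x = cnj (\<eta> k x)" for k x
  have \<eta>L2: "\<eta> k \<in> L2" for k using onb by (simp add: L2_onb_def)
  have eL2: "e k \<in> L2" for k unfolding e_def[abs_def] by (rule L2_cnj[OF \<eta>L2])
  have orth: "L2_inner (e j) (e k) = (if j = k then 1 else 0)" for j k
  proof -
    have "L2_inner (e j) (e k) = cnj (L2_inner (\<eta> j) (\<eta> k))"
      unfolding L2_inner_def e_def by (simp add: Bochner_Integration.integral_cnj[symmetric])
    then show ?thesis using onb by (simp add: L2_onb_def)
  qed
  have coef: "fpair (\<lambda>x. u x * \<eta> k x) \<phi> = L2_inner H (e k)" for k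
  proof -
    have "integrable lborel (\<lambda>x. u x * cnj (e k x))" by (rule L2_int[OF uL2 eL2])
    hence "integrable lborel (\<lambda>x. u x * \<eta> k x)" by (simp add: e_def)
    then show ?thesis by (simp add: rep L2_inner_def H_def e_def ac_simps)
  qed
  have fin: "(\<Sum>k<n. (cmod (fpair (\<lambda>x. u x * \<eta> k x) \<phi>))\<^sup>2) \<le> B\<^sup>2 * (\<integral>x. (cmod (u x))\<^sup>2 \<partial>lborel)" for n
    using bessel_finite[OF HL2 eL2 orth, of n] HB by (simp add: coef)
  have "(\<Sum>k. ennreal ((cmod (fpair (\<lambda>x. u x * \<eta> k x) \<phi>))\<^sup>2))
      \<le> ennreal (B\<^sup>2 * (\<integral>x. (cmod (u x))\<^sup>2 \<partial>lborel))"
    unfolding suminf_eq_SUP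
  proof (rule SUP_least)
    fix n
    show "(\<Sum>k<n. ennreal ((cmod (fpair (\<lambda>x. u x * \<eta> k x) \<phi>))\<^sup>2))
      \<le> ennreal (B\<^sup>2 * (\<integral>x. (cmod (u x))\<^sup>2 \<partial>lborel))"
      using fin[of n] by (simp add: ennreal_leI)
  qed
  also have "\<dots> \<le> ennreal ((B\<^sup>2 + 1) * (\<integral>x. (cmod (u x))\<^sup>2 \<partial>lborel))"
    by (intro ennreal_leI mult_right_mono) auto
  also have "\<dots> = ennreal (B\<^sup>2 + 1) * ennreal (\<integral>x. (cmod (u x))\<^sup>2 \<partial>lborel)"
    by (rule ennreal_mult'') simp
  also have "ennreal (\<integral>x. (cmod (u x))\<^sup>2 \<partial>lborel) = (\<integral>\<^sup>+x. ennreal ((cmod (u x))\<^sup>2) \<partial>lborel)"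
    using ui by (rule nn_integral_eq_integral[symmetric]) simp
  finally show ?thesis .
qed



theorem corollary11p2:
  fixes M :: "'w measure" and F :: "real \<Rightarrow> 'w measure" and \<tau> :: "'w \<Rightarrow> real"
    and \<eta> :: "nat \<Rightarrow> 'a::euclidean_space \<Rightarrow> complex"
    and h :: "'w \<Rightarrow> real \<Rightarrow> 'a \<Rightarrow> complex"
  assumes "prob_space M" and "complete_measure M"
    and "usual_filtration M F"
    and "stopping_time F \<tau>" and "\<And>\<omega>. \<tau> \<omega> \<ge> 0"
    and "L2_onb \<eta>" and "\<And>k. schwartz (\<eta> k)"
    and "(\<lambda>((\<omega>, t), x). h \<omega> t x) \<in> borel_measurable
           (restrict_space (predictable M F \<Otimes>\<^sub>M borel) (stoch_interval \<tau> \<times> UNIV))"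
    and "AE \<omega> in M. (\<integral>\<^sup>+ t. indicator {0<..\<tau> \<omega>} t *
                       (\<integral>\<^sup>+ x. ennreal ((cmod (h \<omega> t x))\<^sup>2) \<partial>lborel) \<partial>lborel) < \<infinity>"
  shows "\<forall>\<phi> \<in> inv_fourier_D. \<forall>T > 0. AE \<omega> in M.
           (\<integral>\<^sup>+ t. indicator {0..T} t * indicator (stoch_interval \<tau>) (\<omega>, t) *
               (\<Sum>k. ennreal ((cmod (fpair (\<lambda>x. h \<omega> t x * \<eta> k x) \<phi>))\<^sup>2)) \<partial>lborel) < \<infinity>"
proof (intro ballI allI impI)
  fix \<phi> :: "'a \<Rightarrow> complex" and T :: real
  assume \<phi>: "\<phi> \<in> inv_fourier_D" and T: "T > 0"
  obtain \<Psi> B where \<Psi>m: "\<Psi> \<in> borel_measurable lborel" and \<Psi>b: "\<And>x. cmod (\<Psi> x) \<le> B"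
    and rep: "\<And>g. integrable lborel g \<Longrightarrow> fpair g \<phi> = (\<integral>x. g x * \<Psi> x \<partial>lborel)"
    using fpair_repr[OF \<phi>] by blast
  define C where "C = ennreal (B\<^sup>2 + 1)"
  have "0 < B\<^sup>2 + 1" using zero_le_power2[of B] by linarith
  hence C0: "0 < C" unfolding C_def by (simp only: ennreal_less_zero_iff)
  have Ctop: "C < top" unfolding C_def by simp
  have hm: "(\<lambda>x. h \<omega> t x) \<in> borel_measurable lborel"
    if "\<omega> \<in> space M" "(\<omega>, t) \<in> stoch_interval \<tau>" for \<omega> t
  proof -
    have sp: "(\<omega>, t) \<in> space (predictable M F)"
      using that unfolding predictable_def space_measure_of_conv stoch_interval_def by auto
    have "(\<lambda>x. ((\<omega>, t), x)) \<in> measurable borel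
        (restrict_space (predictable M F \<Otimes>\<^sub>M borel) (stoch_interval \<tau> \<times> UNIV))"
      by (rule measurable_restrict_space2) (use that measurable_Pair1'[OF sp] in auto)
    from measurable_compose[OF this assms(8)] show ?thesis by simp
  qed
  have bound: "(\<integral>\<^sup>+ t. indicator {0..T} t * indicator (stoch_interval \<tau>) (\<omega>, t) *
               (\<Sum>k. ennreal ((cmod (fpair (\<lambda>x. h \<omega> t x * \<eta> k x) \<phi>))\<^sup>2)) \<partial>lborel) < \<infinity>"
    if \<omega>: "\<omega> \<in> space M" and fin: "(\<integral>\<^sup>+ t. indicator {0<..\<tau> \<omega>} t *
                       (\<integral>\<^sup>+ x. ennreal ((cmod (h \<omega> t x))\<^sup>2) \<partial>lborel) \<partial>lborel) < \<infinity>" for \<omega>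
  proof -
    have "(\<integral>\<^sup>+ t. indicator {0..T} t * indicator (stoch_interval \<tau>) (\<omega>, t) *
               (\<Sum>k. ennreal ((cmod (fpair (\<lambda>x. h \<omega> t x * \<eta> k x) \<phi>))\<^sup>2)) \<partial>lborel)
        \<le> (\<integral>\<^sup>+ t. C * (indicator {0<..\<tau> \<omega>} t *
                       (\<integral>\<^sup>+ x. ennreal ((cmod (h \<omega> t x))\<^sup>2) \<partial>lborel)) \<partial>lborel)"
    proof (rule nn_integral_mono)
      fix t
      show "indicator {0..T} t * indicator (stoch_interval \<tau>) (\<omega>, t) *
               (\<Sum>k. ennreal ((cmod (fpair (\<lambda>x. h \<omega> t x * \<eta> k x) \<phi>))\<^sup>2))
          \<le> C * (indicator {0<..\<tau> \<omega>} t * (\<integral>\<^sup>+ x. ennreal ((cmod (h \<omega> t x))\<^sup>2) \<partial>lborel))"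
      proof (cases "(\<omega>, t) \<in> stoch_interval \<tau>")
        case False then show ?thesis by simp
      next
        case True
        have tin: "t \<in> {0<..\<tau> \<omega>}" using True by (simp add: stoch_interval_def)
        have pb: "(\<Sum>k. ennreal ((cmod (fpair (\<lambda>x. h \<omega> t x * \<eta> k x) \<phi>))\<^sup>2))
           \<le> C * (\<integral>\<^sup>+ x. ennreal ((cmod (h \<omega> t x))\<^sup>2) \<partial>lborel)"
          unfolding C_def by (rule pointwise_bound[OF assms(6) hm[OF \<omega> True] \<Psi>m \<Psi>b rep])
        have "indicator {0..T} t * indicator (stoch_interval \<tau>) (\<omega>, t) *
               (\<Sum>k. ennreal ((cmod (fpair (\<lambda>x. h \<omega> t x * \<eta> k x) \<phi>))\<^sup>2))
            \<le> (\<Sum>k. ennreal ((cmod (fpair (\<lambda>x. h \<omega> t x * \<eta> k x) \<phi>))\<^sup>2))"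
          using True by (simp add: indicator_def)
        also note pb
        finally show ?thesis using tin by simp
      qed
    qed
    also have "\<dots> \<le> C * (\<integral>\<^sup>+ t. indicator {0<..\<tau> \<omega>} t *
                       (\<integral>\<^sup>+ x. ennreal ((cmod (h \<omega> t x))\<^sup>2) \<partial>lborel) \<partial>lborel)"
      by (rule nn_integral_cmult_le[OF C0 Ctop])
    also have "\<dots> < \<infinity>" using fin Ctop by (simp add: ennreal_mult_less_top)
    finally show ?thesis .
  qed
  show "AE \<omega> in M. (\<integral>\<^sup>+ t. indicator {0..T} t * indicator (stoch_interval \<tau>) (\<omega>, t) *
               (\<Sum>k. ennreal ((cmod (fpair (\<lambda>x. h \<omega> t x * \<eta> k x) \<phi>))\<^sup>2)) \<partial>lborel) < \<infinity>"
    using assms(9) AE_space by eventually_elim (rule bound)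
qed

end
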